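(* Let $k\ge1$, let $A_k$ be the matrix defined below, and let $\mathbf{b}=(\mathbf{w}_1,\mathbf{w}_2,c)^{\mathsf T}\in\mathbb{Z}^{2k+1}$ with $\mathbf{w}_1,\mathbf{w}_2\in\mathbb{Z}^k$, $c\in\mathbb{Z}$, such that $\mathcal{F}_{A_k}(\mathbf{b})\neq\emptyset$. Consider the fiber graph $G=G_{A_k,\mathbf{b},\mathcal{G}(A_k)}$ and let $s\in[l(\mathbf{b}),u(\mathbf{b})]$ be an integer. Then a vertex $\mathbf{v}\in C_s(\mathbf{b})$ has a neighbor in $C_{s-1}(\mathbf{b})$ if and only if $s>l(\mathbf{b})$, and in this case it has at least $2^k$ neighbors in $C_{s-1}(\mathbf{b})$. Likewise, $\mathbf{v}$ has a neighbor in $C_{s+1}(\mathbf{b})$ if and only if $s<u(\mathbf{b})$, and in this case it has at least $2^k$ neighbors in $C_{s+1}(\mathbf{b})$.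
   Context: $I_k$ is the $k\times k$ identity, $\mathbf{1}_k$ the all-ones vector in $\mathbb{Z}^k$. Define $$A_k=\begin{pmatrix} I_k & I_k & 0 & 0 & -\mathbf{1}_k & \mathbf{0}\\ 0&0&I_k&I_k&\mathbf{0}&-\mathbf{1}_k\\ 0&0&0&0&1&1\end{pmatrix}\in\mathbb{Z}^{(2k+1)\times(4k+2)}$$ (zero blocks of appropriate sizes; last two columns are single columns). Fiber: $\mathcal{F}_A(\mathbf{b})=\{\mathbf{u}\in\mathbb{Z}^n_{\ge0}:A\mathbf{u}=\mathbf{b}\}$. For $\mathcal{M}\subset\mathbb{Z}^n$, $G_{A,\mathbf{b},\mathcal{M}}$ is the graph on $\mathcal{F}_A(\mathbf{b})$ with distinct $\mathbf{u},\mathbf{v}$ adjacent iff $\mathbf{u}-\mathbf{v}\in\pm\mathcal{M}$. The Graver basis $\mathcal{G}(A)$ is the set of $\sqsubseteq$-minimal elements of $(\ker A\cap\mathbb{Z}^n)\setminus\{\mathbf{0}\}$, where $\mathbf{u}\sqsubseteq\mathbf{v}$ iff $u_iv_i\ge0$ and $|u_i|\le|v_i|$ for all $i$. For $\mathbf{w}\in\mathbb{Z}^k$, $\mathbf{w}^-\in\mathbb{Z}^k_{\ge0}$ has entries $\max(-w_i,0)$. For $\mathbf{b}=(\mathbf{w}_1,\mathbf{w}_2,c)$ set $l(\mathbf{b}):=\|\mathbf{w}_1^-\|_\infty$ and $u(\mathbf{b}):=c-\|\mathbf{w}_2^-\|_\infty$. For an integer $s$, $C_s(\mathbf{b}):=\{\mathbf{u}\in\mathcal{F}_{A_k}(\mathbf{b}):u_{4k+1}=s\}$.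 *)

theory Defs
  imports Main
begin

text \<open>Vectors in Z^n are modelled as functions nat => int, with components indexed
  0..n-1 (0-based) and required to vanish outside {0..<n}. Matrices are functions
  nat => nat => int (row, column), 0-based.\<close>

definition zvec :: "nat \<Rightarrow> (nat \<Rightarrow> int) set" where
  "zvec n = {u. \<forall>i\<ge>n. u i = 0}"

definition mat_vec :: "nat \<Rightarrow> (nat \<Rightarrow> nat \<Rightarrow> int) \<Rightarrow> (nat \<Rightarrow> int) \<Rightarrow> nat \<Rightarrow> int" where
  "mat_vec n A u = (\<lambda>i. \<Sum>j<n. A i j * u j)"

text \<open>The matrix A_k of size (2k+1) x (4k+2), 0-based: column blocks
  [0,k), [k,2k), [2k,3k), [3k,4k), then column 4k and column 4k+1.\<close>
definition Ak :: "nat \<Rightarrow> nat \<Rightarrow> nat \<Rightarrow> int" where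
  "Ak k i j =
     (if i < k then
        (if j = i \<or> j = k + i then 1 else if j = 4*k then -1 else 0)
      else if i < 2*k then
        (if j = 2*k + (i - k) \<or> j = 3*k + (i - k) then 1 else if j = 4*k + 1 then -1 else 0)
      else if i = 2*k then
        (if j = 4*k \<or> j = 4*k + 1 then 1 else 0)
      else 0)"

definition fiber :: "nat \<Rightarrow> nat \<Rightarrow> (nat \<Rightarrow> nat \<Rightarrow> int) \<Rightarrow> (nat \<Rightarrow> int) \<Rightarrow> (nat \<Rightarrow> int) set" where
  "fiber m n A b = {u \<in> zvec n. (\<forall>i<n. 0 \<le> u i) \<and> (\<forall>i<m. mat_vec n A u i = b i)}"

definition int_kernel :: "nat \<Rightarrow> nat \<Rightarrow> (nat \<Rightarrow> nat \<Rightarrow> int) \<Rightarrow> (nat \<Rightarrow> int) set" where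
  "int_kernel m n A = {u \<in> zvec n. \<forall>i<m. mat_vec n A u i = 0}"

definition conformal_le :: "(nat \<Rightarrow> int) \<Rightarrow> (nat \<Rightarrow> int) \<Rightarrow> bool" where
  "conformal_le u v \<longleftrightarrow> (\<forall>i. u i * v i \<ge> 0 \<and> \<bar>u i\<bar> \<le> \<bar>v i\<bar>)"

definition graver :: "nat \<Rightarrow> nat \<Rightarrow> (nat \<Rightarrow> nat \<Rightarrow> int) \<Rightarrow> (nat \<Rightarrow> int) set" where
  "graver m n A = {u \<in> int_kernel m n A - {(\<lambda>_. 0)}.
       \<forall>v \<in> int_kernel m n A - {(\<lambda>_. 0)}. conformal_le v u \<longrightarrow> v = u}"

text \<open>Adjacency in the fiber graph G_{A,b,M} (vertex set is the fiber).\<close>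
definition fiber_adj :: "(nat \<Rightarrow> int) set \<Rightarrow> (nat \<Rightarrow> int) \<Rightarrow> (nat \<Rightarrow> int) \<Rightarrow> bool" where
  "fiber_adj M u v \<longleftrightarrow> u \<noteq> v \<and>
     ((\<lambda>i. u i - v i) \<in> M \<or> (\<lambda>i. v i - u i) \<in> M)"

definition bvec :: "nat \<Rightarrow> (nat \<Rightarrow> int) \<Rightarrow> (nat \<Rightarrow> int) \<Rightarrow> int \<Rightarrow> nat \<Rightarrow> int" where
  "bvec k w1 w2 c = (\<lambda>i. if i < k then w1 i else if i < 2*k then w2 (i - k)
                         else if i = 2*k then c else 0)"

definition neg_inf_norm :: "nat \<Rightarrow> (nat \<Rightarrow> int) \<Rightarrow> int" where
  "neg_inf_norm k w = Max ({max (- w i) 0 | i. i < k} \<union> {0})"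

definition lb :: "nat \<Rightarrow> (nat \<Rightarrow> int) \<Rightarrow> int" where
  "lb k w1 = neg_inf_norm k w1"

definition ub :: "nat \<Rightarrow> (nat \<Rightarrow> int) \<Rightarrow> int \<Rightarrow> int" where
  "ub k w2 c = c - neg_inf_norm k w2"

abbreviation FAk :: "nat \<Rightarrow> (nat \<Rightarrow> int) \<Rightarrow> (nat \<Rightarrow> int) set" where
  "FAk k b \<equiv> fiber (2*k+1) (4*k+2) (Ak k) b"

text \<open>C_s(b): elements of the fiber with u_{4k+1} (1-based) = s, i.e. 0-based index 4k.\<close>
definition Cs :: "nat \<Rightarrow> (nat \<Rightarrow> int) \<Rightarrow> int \<Rightarrow> (nat \<Rightarrow> int) set" where
  "Cs k b s = {u \<in> FAk k b. u (4*k) = s}"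

end

theory Submission
  imports Defs
begin

lemma mv_rows:
  assumes "i < k"
  shows "mat_vec (4*k+2) (Ak k) u i = u i + u (k+i) - u (4*k)"
    and "mat_vec (4*k+2) (Ak k) u (k+i) = u (2*k+i) + u (3*k+i) - u (4*k+1)"
proof -
  have "(\<Sum>j<4*k+2. Ak k i j * u j) = (\<Sum>j<4*k+2. (if j = i then u i else 0) + (if j = k+i then u (k+i) else 0) + (if j = 4*k then - u (4*k) else 0))"
    by (rule sum.cong) (use assms in \<open>auto simp: Ak_def\<close>)
  also have "\<dots> = u i + u (k+i) - u (4*k)" using assms by (simp add: sum.distrib)
  finally show "mat_vec (4*k+2) (Ak k) u i = u i + u (k+i) - u (4*k)" by (simp add: mat_vec_def)
  have "(\<Sum>j<4*k+2. Ak k (k+i) j * u j) = (\<Sum>j<4*k+2. (if j = 2*k+i then u (2*k+i) else 0) + (if j = 3*k+i then u (3*k+i) else 0) + (if j = 4*k+1 then - u (4*k+1) else 0))"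
    by (rule sum.cong) (use assms in \<open>auto simp: Ak_def\<close>)
  also have "\<dots> = u (2*k+i) + u (3*k+i) - u (4*k+1)" using assms by (simp add: sum.distrib)
  finally show "mat_vec (4*k+2) (Ak k) u (k+i) = u (2*k+i) + u (3*k+i) - u (4*k+1)" by (simp add: mat_vec_def)
qed

lemma mv_last: "mat_vec (4*k+2) (Ak k) u (2*k) = u (4*k) + u (4*k+1)"
proof -
  have "(\<Sum>j<4*k+2. Ak k (2*k) j * u j) = (\<Sum>j<4*k+2. (if j = 4*k then u (4*k) else 0) + (if j = 4*k+1 then u (4*k+1) else 0))"
    by (rule sum.cong) (auto simp: Ak_def)
  also have "\<dots> = u (4*k) + u (4*k+1)" by (simp add: sum.distrib)
  finally show ?thesis by (simp add: mat_vec_def)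
qed

lemma rows_iff:
  "(\<forall>i<2*k+1. mat_vec (4*k+2) (Ak k) u i = r i) \<longleftrightarrow>
   (\<forall>i<k. u i + u (k+i) - u (4*k) = r i \<and> u (2*k+i) + u (3*k+i) - u (4*k+1) = r (k+i))
   \<and> u (4*k) + u (4*k+1) = r (2*k)"
proof
  assume H: "\<forall>i<2*k+1. mat_vec (4*k+2) (Ak k) u i = r i"
  show "(\<forall>i<k. u i + u (k+i) - u (4*k) = r i \<and> u (2*k+i) + u (3*k+i) - u (4*k+1) = r (k+i))
   \<and> u (4*k) + u (4*k+1) = r (2*k)"
  proof (intro conjI allI impI)
    fix i assume "i < k"
    then show "u i + u (k+i) - u (4*k) = r i" "u (2*k+i) + u (3*k+i) - u (4*k+1) = r (k+i)"
      using H[rule_format, of i] H[rule_format, of "k+i"] mv_rows[of i k u] by auto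
  next
    show "u (4*k) + u (4*k+1) = r (2*k)" using H[rule_format, of "2*k"] mv_last[of k u] by auto
  qed
next
  assume H: "(\<forall>i<k. u i + u (k+i) - u (4*k) = r i \<and> u (2*k+i) + u (3*k+i) - u (4*k+1) = r (k+i))
   \<and> u (4*k) + u (4*k+1) = r (2*k)"
  show "\<forall>i<2*k+1. mat_vec (4*k+2) (Ak k) u i = r i"
  proof (intro allI impI)
    fix i assume i: "i < 2*k+1"
    show "mat_vec (4*k+2) (Ak k) u i = r i"
    proof (cases "i < k")
      case True then show ?thesis using H mv_rows[of i k u] by auto
    next
      case F: False
      show ?thesis
      proof (cases "i < 2*k")
        case True
        then obtain i' where "i = k + i'" "i' < k" using F by (metis add_diff_inverse_nat less_diff_conv2 mult_2 not_less)
        then show ?thesis using H mv_rows[of i' k u] by auto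
      next
        case False then have "i = 2*k" using i by auto
        then show ?thesis using H mv_last[of k u] by auto
      qed
    qed
  qed
qed

lemma FAk_iff:
  "u \<in> FAk k (bvec k w1 w2 c) \<longleftrightarrow> u \<in> zvec (4*k+2) \<and> (\<forall>j<4*k+2. 0 \<le> u j) \<and>
    (\<forall>i<k. u i + u (k+i) - u (4*k) = w1 i \<and> u (2*k+i) + u (3*k+i) - u (4*k+1) = w2 i)
   \<and> u (4*k) + u (4*k+1) = c"
  unfolding fiber_def using rows_iff[of k u "bvec k w1 w2 c"] by (auto simp: bvec_def)

lemma ker_iff:
  "g \<in> int_kernel (2*k+1) (4*k+2) (Ak k) \<longleftrightarrow> g \<in> zvec (4*k+2) \<and>
    (\<forall>i<k. g i + g (k+i) - g (4*k) = 0 \<and> g (2*k+i) + g (3*k+i) - g (4*k+1) = 0)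
   \<and> g (4*k) + g (4*k+1) = 0"
  unfolding int_kernel_def using rows_iff[of k g "\<lambda>_. 0"] by auto

lemma fiber_add:
  assumes "u \<in> fiber m n A b" "g \<in> int_kernel m n A" "\<forall>j<n. 0 \<le> u j + g j"
  shows "(\<lambda>j. u j + g j) \<in> fiber m n A b"
  using assms unfolding fiber_def int_kernel_def zvec_def mat_vec_def
  by (auto simp: sum.distrib algebra_simps)

lemma pair:
  fixes p q P Q e d :: int
  assumes "e = 1 \<or> e = -1" "P = 0 \<or> P = e" "P + Q = e" "p*P \<ge> 0" "\<bar>p\<bar> \<le> \<bar>P\<bar>" "q*Q \<ge> 0" "\<bar>q\<bar> \<le> \<bar>Q\<bar>" "p + q = d"
  shows "(d = 0 \<longrightarrow> p = 0 \<and> q = 0) \<and> (d = e \<longrightarrow> p = P \<and> q = Q)"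
  using assms by (auto simp: abs_if split: if_splits)

lemma idx_cases:
  fixes j k :: nat
  assumes "j < 4*k+2"
  obtains "j = 4*k" | "j = 4*k+1" | i where "i<k" "j = i" | i where "i<k" "j=k+i"
   | i where "i<k" "j = 2*k+i" | i where "i<k" "j=3*k+i"
proof -
  consider "j < k" | "k \<le> j" "j < 2*k" | "2*k \<le> j" "j < 3*k" | "3*k \<le> j" "j < 4*k" | "j = 4*k" | "j = 4*k+1"
    using assms by linarith
  then show ?thesis
  proof cases
    case 1 then show ?thesis using that(3) by blast
  next
    case 2 then show ?thesis using that(4)[of "j-k"] by auto
  next
    case 3 then show ?thesis using that(5)[of "j-2*k"] by auto
  next
    case 4 then show ?thesis using that(6)[of "j-3*k"] by auto
  qed (use that in auto)
qed


lemma graver_elt: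
  assumes gz: "g \<in> zvec (4*k+2)" and e: "e = 1 \<or> e = -1" and g4: "g (4*k) = e" and g5: "g (4*k+1) = -e"
    and gi: "\<forall>i<k. (g i = 0 \<or> g i = e) \<and> g i + g (k+i) = e \<and> (g (2*k+i) = 0 \<or> g (2*k+i) = -e) \<and> g (2*k+i) + g (3*k+i) = -e"
  shows "g \<in> graver (2*k+1) (4*k+2) (Ak k)"
proof -
  have gk: "g \<in> int_kernel (2*k+1) (4*k+2) (Ak k)"
    unfolding ker_iff using gz g4 g5 gi by auto
  have nz: "g \<noteq> (\<lambda>_. 0)" using g4 e by (metis zero_neq_one neg_equal_0_iff_equal)
  have "h = g" if hk: "h \<in> int_kernel (2*k+1) (4*k+2) (Ak k)" and hnz: "h \<noteq> (\<lambda>_. 0)" and hc: "conformal_le h g" for h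
  proof -
    from hk have hz: "h \<in> zvec (4*k+2)" and hr: "\<forall>i<k. h i + h (k+i) - h (4*k) = 0 \<and> h (2*k+i) + h (3*k+i) - h (4*k+1) = 0"
      and h45: "h (4*k) + h (4*k+1) = 0" unfolding ker_iff by auto
    have C: "h j * g j \<ge> 0 \<and> \<bar>h j\<bar> \<le> \<bar>g j\<bar>" for j using hc unfolding conformal_le_def by auto
    have h4: "h (4*k) = 0 \<or> h (4*k) = e" using C[of "4*k"] g4 e by (auto simp: abs_if split: if_splits)
    have P1: "(h (4*k) = 0 \<longrightarrow> h i = 0 \<and> h (k+i) = 0) \<and> (h (4*k) = e \<longrightarrow> h i = g i \<and> h (k+i) = g (k+i))" if "i<k" for i
      by (rule pair[OF e]) (use gi hr C that in auto)
    have P2: "(h (4*k+1) = 0 \<longrightarrow> h (2*k+i) = 0 \<and> h (3*k+i) = 0) \<and> (h (4*k+1) = -e \<longrightarrow> h (2*k+i) = g (2*k+i) \<and> h (3*k+i) = g (3*k+i))" if "i<k" for i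
      by (rule pair) (use e gi hr C that in auto)
    show "h = g"
    proof (cases "h (4*k) = 0")
      case True
      have "h = (\<lambda>_. 0)"
      proof
        fix j show "h j = 0"
        proof (cases "j < 4*k+2")
          case True
          then show ?thesis
            by (rule idx_cases) (use P1 P2 h45 \<open>h (4*k) = 0\<close> in auto)
        next
          case False then show ?thesis using hz by (auto simp: zvec_def)
        qed
      qed
      with hnz show ?thesis by blast
    next
      case False
      then have he: "h (4*k) = e" using h4 by auto
      then have he5: "h (4*k+1) = -e" using h45 by auto
      show ?thesis
      proof
        fix j show "h j = g j"
        proof (cases "j < 4*k+2")
          case True
          then show ?thesis
            by (rule idx_cases) (use P1 P2 he he5 g4 g5 in auto)
        next
          case False then show ?thesis using hz gz by (auto simp: zvec_def)
        qed
      qed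
    qed
  qed
  then show ?thesis unfolding graver_def using gk nz by auto
qed

lemma nn_ge: "i < k \<Longrightarrow> max (- w i) 0 \<le> neg_inf_norm k w"
  unfolding neg_inf_norm_def by (rule Max_ge) auto

lemma nn_0: "0 \<le> neg_inf_norm k w"
  unfolding neg_inf_norm_def by (rule Max_ge) auto

lemma nn_le: "(\<forall>i<k. - w i \<le> t) \<Longrightarrow> 0 \<le> t \<Longrightarrow> neg_inf_norm k w \<le> t"
  unfolding neg_inf_norm_def by (rule Max.boundedI) auto

lemma FAk_bounds:
  assumes "u \<in> FAk k (bvec k w1 w2 c)"
  shows "lb k w1 \<le> u (4*k) \<and> u (4*k) \<le> ub k w2 c"
proof -
  from assms have nn: "\<forall>j<4*k+2. 0 \<le> u j" and r: "\<forall>i<k. u i + u (k+i) - u (4*k) = w1 i \<and> u (2*k+i) + u (3*k+i) - u (4*k+1) = w2 i"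
    and l: "u (4*k) + u (4*k+1) = c" unfolding FAk_iff by auto
  have a: "lb k w1 \<le> u (4*k)" unfolding lb_def
  proof (rule nn_le)
    show "\<forall>i<k. - w1 i \<le> u (4 * k)"
    proof (intro allI impI)
      fix i assume "i<k" then show "- w1 i \<le> u (4 * k)" using r nn[rule_format, of i] nn[rule_format, of "k+i"] by force
    qed
  qed (use nn in auto)
  have b: "neg_inf_norm k w2 \<le> u (4*k+1)"
  proof (rule nn_le)
    show "\<forall>i<k. - w2 i \<le> u (4 * k+1)"
    proof (intro allI impI)
      fix i assume "i<k" then show "- w2 i \<le> u (4 * k+1)" using r nn[rule_format, of "2*k+i"] nn[rule_format, of "3*k+i"] by force
    qed
  qed (use nn in auto)
  show ?thesis using a b l unfolding ub_def by auto
qed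

lemma FAk_finite: "finite (FAk k (bvec k w1 w2 c))"
proof -
  define F where "F = FAk k (bvec k w1 w2 c)"
  define B where "B = \<bar>c\<bar> + (\<Sum>i<k. \<bar>w1 i\<bar> + \<bar>w2 i\<bar>)"
  have sle: "\<bar>w1 i\<bar> + \<bar>w2 i\<bar> \<le> (\<Sum>i<k. \<bar>w1 i\<bar> + \<bar>w2 i\<bar>)" if "i<k" for i
    by (rule member_le_sum) (use that in auto)
  have s0: "0 \<le> (\<Sum>i<k. \<bar>w1 i\<bar> + \<bar>w2 i\<bar>)" by (rule sum_nonneg) auto
  have bnd: "u j \<in> {0..B}" if "u \<in> F" "j < 4*k+2" for u j
  proof -
    from that(1) have nn: "\<forall>j<4*k+2. 0 \<le> u j" and r: "\<forall>i<k. u i + u (k+i) - u (4*k) = w1 i \<and> u (2*k+i) + u (3*k+i) - u (4*k+1) = w2 i"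
      and l: "u (4*k) + u (4*k+1) = c" unfolding F_def FAk_iff by auto
    have a4: "u (4*k) \<le> \<bar>c\<bar>" "u (4*k+1) \<le> \<bar>c\<bar>" using nn l by force+
    show ?thesis using that(2)
    proof (rule idx_cases)
      fix i assume i: "i<k" "j = i"
      have "u i + u (k+i) - u (4*k) = w1 i" "0 \<le> u i" "0 \<le> u (k+i)" using r nn i by auto
      then show ?thesis using i a4 sle[OF i(1)] s0 unfolding B_def by auto
    next
      fix i assume i: "i<k" "j = k+i"
      have "u i + u (k+i) - u (4*k) = w1 i" "0 \<le> u i" "0 \<le> u (k+i)" using r nn i by auto
      then show ?thesis using i a4 sle[OF i(1)] s0 unfolding B_def by auto
    next
      fix i assume i: "i<k" "j = 2*k+i"
      have "u (2*k+i) + u (3*k+i) - u (4*k+1) = w2 i" "0 \<le> u (2*k+i)" "0 \<le> u (3*k+i)" using r nn i by auto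
      then show ?thesis using i a4 sle[OF i(1)] s0 unfolding B_def by auto
    next
      fix i assume i: "i<k" "j = 3*k+i"
      have "u (2*k+i) + u (3*k+i) - u (4*k+1) = w2 i" "0 \<le> u (2*k+i)" "0 \<le> u (3*k+i)" using r nn i by auto
      then show ?thesis using i a4 sle[OF i(1)] s0 unfolding B_def by auto
    qed (use nn a4 s0 B_def in force)+
  qed
  have inj: "inj_on (\<lambda>u. map u [0..<4*k+2]) F"
  proof (rule inj_onI)
    fix u u' assume "u \<in> F" "u' \<in> F" "map u [0..<4*k+2] = map u' [0..<4*k+2]"
    then have e: "\<forall>j<4*k+2. u j = u' j" by (simp only: map_eq_conv set_upt) auto
    show "u = u'"
    proof
      fix j show "u j = u' j"
        using e \<open>u \<in> F\<close> \<open>u' \<in> F\<close> unfolding F_def fiber_def zvec_def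
        by (cases "j < 4*k+2") auto
    qed
  qed
  have "(\<lambda>u. map u [0..<4*k+2]) ` F \<subseteq> {xs. set xs \<subseteq> {0..B} \<and> length xs = 4*k+2}"
    using bnd by auto
  then have "finite ((\<lambda>u. map u [0..<4*k+2]) ` F)"
    by (rule finite_subset) (rule finite_lists_length_eq, simp)
  then show ?thesis using inj finite_imageD unfolding F_def by blast
qed


lemma down:
  assumes k: "k \<ge> 1" and v: "v \<in> Cs k (bvec k w1 w2 c) s" and s: "lb k w1 < s"
  shows "2^k \<le> card {v' \<in> Cs k (bvec k w1 w2 c) (s-1). fiber_adj (graver (2*k+1) (4*k+2) (Ak k)) v v'}"
proof -
  define g :: "nat set \<Rightarrow> nat \<Rightarrow> int" where "g P j =
    (if j < k then (if 0 < v j then -1 else 0)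
     else if j < 2*k then (if 0 < v (j-k) then 0 else -1)
     else if j < 3*k then (if j-2*k \<in> P then 1 else 0)
     else if j < 4*k then (if j-3*k \<in> P then 0 else 1)
     else if j = 4*k then -1 else if j = 4*k+1 then 1 else 0)" for P j
  define nb where "nb P = (\<lambda>j. v j + g P j)" for P
  let ?S = "{v' \<in> Cs k (bvec k w1 w2 c) (s-1). fiber_adj (graver (2*k+1) (4*k+2) (Ak k)) v v'}"
  from v have vF: "v \<in> FAk k (bvec k w1 w2 c)" and v4: "v (4*k) = s" unfolding Cs_def by auto
  then have nn: "\<forall>j<4*k+2. 0 \<le> v j" and r: "\<forall>i<k. v i + v (k+i) - v (4*k) = w1 i \<and> v (2*k+i) + v (3*k+i) - v (4*k+1) = w2 i"
    unfolding FAk_iff by auto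
  have pos: "1 \<le> v i + v (k+i)" if "i<k" for i
    using nn_ge[OF that, of w1] s r that v4 unfolding lb_def by force
  have lb0: "0 \<le> lb k w1" unfolding lb_def by (rule nn_0)
  have g4: "g P (4*k) = -1" "g P (4*k+1) = 1" for P using k by (auto simp: g_def)
  have gi: "g P i = (if 0 < v i then -1 else 0)" "g P (k+i) = (if 0 < v i then 0 else -1)"
    "g P (2*k+i) = (if i \<in> P then 1 else 0)" "g P (3*k+i) = (if i \<in> P then 0 else 1)" if "i<k" for P i
    using that by (auto simp: g_def)
  have gG: "g P \<in> graver (2*k+1) (4*k+2) (Ak k)" for P
  proof (rule graver_elt[where e="-1"])
    show "g P \<in> zvec (4*k+2)" unfolding zvec_def g_def by auto
  qed (use g4 gi in auto)
  have inS: "nb P \<in> ?S" for P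
  proof -
    have "g P \<in> int_kernel (2*k+1) (4*k+2) (Ak k)" using gG unfolding graver_def by auto
    moreover have "\<forall>j<4*k+2. 0 \<le> v j + g P j"
    proof (intro allI impI)
      fix j assume "j < 4*k+2"
      then show "0 \<le> v j + g P j"
      proof (rule idx_cases)
        assume "j = 4*k" then show ?thesis using g4 v4 s lb0 by simp
      next
        assume "j = 4*k+1" then show ?thesis using g4 nn by simp
      next
        fix i assume i: "i<k" "j = i"
        have "0 \<le> v i" using nn i by simp
        then show ?thesis using gi[OF i(1)] i by simp
      next
        fix i assume i: "i<k" "j = k+i"
        have "0 \<le> v (k+i)" "0 \<le> v i" using nn i by simp_all
        then show ?thesis using pos[OF i(1)] gi[OF i(1)] i by simp
      next
        fix i assume i: "i<k" "j = 2*k+i"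
        have "0 \<le> v (2*k+i)" using nn i by simp
        then show ?thesis using gi[OF i(1)] i by simp
      next
        fix i assume i: "i<k" "j = 3*k+i"
        have "0 \<le> v (3*k+i)" using nn i by simp
        then show ?thesis using gi[OF i(1)] i by simp
      qed
    qed
    ultimately have "nb P \<in> FAk k (bvec k w1 w2 c)" unfolding nb_def by (rule fiber_add[OF vF])
    moreover have "nb P (4*k) = s - 1" using v4 g4 unfolding nb_def by auto
    moreover have "fiber_adj (graver (2*k+1) (4*k+2) (Ak k)) v (nb P)"
    proof -
      have "nb P (4*k) \<noteq> v (4*k)" using g4 unfolding nb_def by simp
      then have "v \<noteq> nb P" by auto
      moreover have "(\<lambda>i. nb P i - v i) = g P" unfolding nb_def by auto
      ultimately show ?thesis unfolding fiber_adj_def using gG by auto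
    qed
    ultimately show ?thesis unfolding Cs_def by auto
  qed
  have inj: "inj_on nb (Pow {..<k})"
  proof (rule inj_onI)
    fix P Q assume P: "P \<in> Pow {..<k}" and Q: "Q \<in> Pow {..<k}" and e: "nb P = nb Q"
    show "P = Q"
    proof
      show "P \<subseteq> Q"
      proof
        fix i assume "i \<in> P" then have i: "i < k" using P by auto
        have "nb P (2*k+i) = nb Q (2*k+i)" using e by simp
        then have "g P (2*k+i) = g Q (2*k+i)" unfolding nb_def by simp
        then show "i \<in> Q" using gi[OF i, of P] gi[OF i, of Q] \<open>i\<in>P\<close> by (simp split: if_splits)
      qed
    next
      show "Q \<subseteq> P"
      proof
        fix i assume "i \<in> Q" then have i: "i < k" using Q by auto
        have "nb P (2*k+i) = nb Q (2*k+i)" using e by simp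
        then have "g P (2*k+i) = g Q (2*k+i)" unfolding nb_def by simp
        then show "i \<in> P" using gi[OF i, of P] gi[OF i, of Q] \<open>i\<in>Q\<close> by (simp split: if_splits)
      qed
    qed
  qed
  have fin: "finite ?S" by (rule finite_subset[OF _ FAk_finite[of k w1 w2 c]]) (auto simp: Cs_def)
  have "(2::nat)^k = card (nb ` Pow {..<k})" using card_image[OF inj] by (simp add: card_Pow)
  also have "\<dots> \<le> card ?S" by (rule card_mono[OF fin]) (use inS in auto)
  finally show ?thesis .
qed


lemma up:
  assumes k: "k \<ge> 1" and v: "v \<in> Cs k (bvec k w1 w2 c) s" and s: "s < ub k w2 c"
  shows "2^k \<le> card {v' \<in> Cs k (bvec k w1 w2 c) (s+1). fiber_adj (graver (2*k+1) (4*k+2) (Ak k)) v v'}"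
proof -
  define g :: "nat set \<Rightarrow> nat \<Rightarrow> int" where "g P j =
    (if j < k then (if j \<in> P then 1 else 0)
     else if j < 2*k then (if j-k \<in> P then 0 else 1)
     else if j < 3*k then (if 0 < v j then -1 else 0)
     else if j < 4*k then (if 0 < v (j-k) then 0 else -1)
     else if j = 4*k then 1 else if j = 4*k+1 then -1 else 0)" for P j
  define nb where "nb P = (\<lambda>j. v j + g P j)" for P
  let ?S = "{v' \<in> Cs k (bvec k w1 w2 c) (s+1). fiber_adj (graver (2*k+1) (4*k+2) (Ak k)) v v'}"
  from v have vF: "v \<in> FAk k (bvec k w1 w2 c)" and v4: "v (4*k) = s" unfolding Cs_def by auto
  then have nn: "\<forall>j<4*k+2. 0 \<le> v j" and r: "\<forall>i<k. v i + v (k+i) - v (4*k) = w1 i \<and> v (2*k+i) + v (3*k+i) - v (4*k+1) = w2 i"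
    and l: "v (4*k) + v (4*k+1) = c"
    unfolding FAk_iff by auto
  have pos: "1 \<le> v (2*k+i) + v (3*k+i)" if "i<k" for i
    using nn_ge[OF that, of w2] s r that v4 l unfolding ub_def by force
  have v5: "1 \<le> v (4*k+1)" using s l v4 nn_0[of k w2] unfolding ub_def by simp
  have g4: "g P (4*k) = 1" "g P (4*k+1) = -1" for P using k by (auto simp: g_def)
  have gi: "g P i = (if i \<in> P then 1 else 0)" "g P (k+i) = (if i \<in> P then 0 else 1)"
    "g P (2*k+i) = (if 0 < v (2*k+i) then -1 else 0)" "g P (3*k+i) = (if 0 < v (2*k+i) then 0 else -1)" if "i<k" for P i
    using that by (auto simp: g_def)
  have gG: "g P \<in> graver (2*k+1) (4*k+2) (Ak k)" for P
  proof (rule graver_elt[where e="1"])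
    show "g P \<in> zvec (4*k+2)" unfolding zvec_def g_def by auto
  qed (use g4 gi in auto)
  have inS: "nb P \<in> ?S" for P
  proof -
    have "g P \<in> int_kernel (2*k+1) (4*k+2) (Ak k)" using gG unfolding graver_def by auto
    moreover have "\<forall>j<4*k+2. 0 \<le> v j + g P j"
    proof (intro allI impI)
      fix j assume "j < 4*k+2"
      then show "0 \<le> v j + g P j"
      proof (rule idx_cases)
        assume "j = 4*k" then show ?thesis using g4 nn by simp
      next
        assume "j = 4*k+1" then show ?thesis using g4 v5 by simp
      next
        fix i assume i: "i<k" "j = i"
        have "0 \<le> v i" using nn i by simp
        then show ?thesis using gi[OF i(1)] i by simp
      next
        fix i assume i: "i<k" "j = k+i"
        have "0 \<le> v (k+i)" using nn i by simp_all
        then show ?thesis using gi[OF i(1)] i by simp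
      next
        fix i assume i: "i<k" "j = 2*k+i"
        have "0 \<le> v (2*k+i)" using nn i by simp
        then show ?thesis using gi[OF i(1)] i by simp
      next
        fix i assume i: "i<k" "j = 3*k+i"
        have "0 \<le> v (3*k+i)" "0 \<le> v (2*k+i)" using nn i by simp_all
        then show ?thesis using pos[OF i(1)] gi[OF i(1)] i by simp
      qed
    qed
    ultimately have "nb P \<in> FAk k (bvec k w1 w2 c)" unfolding nb_def by (rule fiber_add[OF vF])
    moreover have "nb P (4*k) = s + 1" using v4 g4 unfolding nb_def by auto
    moreover have "fiber_adj (graver (2*k+1) (4*k+2) (Ak k)) v (nb P)"
    proof -
      have "nb P (4*k) \<noteq> v (4*k)" using g4 unfolding nb_def by simp
      then have "v \<noteq> nb P" by auto
      moreover have "(\<lambda>i. nb P i - v i) = g P" unfolding nb_def by auto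
      ultimately show ?thesis unfolding fiber_adj_def using gG by auto
    qed
    ultimately show ?thesis unfolding Cs_def by auto
  qed
  have inj: "inj_on nb (Pow {..<k})"
  proof (rule inj_onI)
    fix P Q assume P: "P \<in> Pow {..<k}" and Q: "Q \<in> Pow {..<k}" and e: "nb P = nb Q"
    show "P = Q"
    proof
      show "P \<subseteq> Q"
      proof
        fix i assume "i \<in> P" then have i: "i < k" using P by auto
        have "nb P i = nb Q i" using e by simp
        then have "g P i = g Q i" unfolding nb_def by simp
        then show "i \<in> Q" using gi[OF i, of P] gi[OF i, of Q] \<open>i\<in>P\<close> by (simp split: if_splits)
      qed
    next
      show "Q \<subseteq> P"
      proof
        fix i assume "i \<in> Q" then have i: "i < k" using Q by auto
        have "nb P i = nb Q i" using e by simp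
        then have "g P i = g Q i" unfolding nb_def by simp
        then show "i \<in> P" using gi[OF i, of P] gi[OF i, of Q] \<open>i\<in>Q\<close> by (simp split: if_splits)
      qed
    qed
  qed
  have fin: "finite ?S" by (rule finite_subset[OF _ FAk_finite[of k w1 w2 c]]) (auto simp: Cs_def)
  have "(2::nat)^k = card (nb ` Pow {..<k})" using card_image[OF inj] by (simp add: card_Pow)
  also have "\<dots> \<le> card ?S" by (rule card_mono[OF fin]) (use inS in auto)
  finally show ?thesis .
qed

theorem proposition2:
  fixes k :: nat and w1 w2 :: "nat \<Rightarrow> int" and c s :: int and v :: "nat \<Rightarrow> int"
  defines "b \<equiv> bvec k w1 w2 c"
  defines "G \<equiv> graver (2*k+1) (4*k+2) (Ak k)"
  assumes "k \<ge> 1"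
    and "FAk k b \<noteq> {}"
    and "lb k w1 \<le> s" and "s \<le> ub k w2 c"
    and "v \<in> Cs k b s"
  shows "((\<exists>v'\<in>Cs k b (s - 1). fiber_adj G v v') \<longleftrightarrow> s > lb k w1)
       \<and> (s > lb k w1 \<longrightarrow> card {v'\<in>Cs k b (s - 1). fiber_adj G v v'} \<ge> 2^k)
       \<and> ((\<exists>v'\<in>Cs k b (s + 1). fiber_adj G v v') \<longleftrightarrow> s < ub k w2 c)
       \<and> (s < ub k w2 c \<longrightarrow> card {v'\<in>Cs k b (s + 1). fiber_adj G v v'} \<ge> 2^k)"
proof -
  have D: "s > lb k w1 \<Longrightarrow> card {v'\<in>Cs k b (s - 1). fiber_adj G v v'} \<ge> 2^k"
    using down[of k v w1 w2 c s] assms unfolding b_def G_def by blast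
  have U: "s < ub k w2 c \<Longrightarrow> card {v'\<in>Cs k b (s + 1). fiber_adj G v v'} \<ge> 2^k"
    using up[of k v w1 w2 c s] assms unfolding b_def G_def by blast
  have ne: "A \<noteq> {}" if "(2::nat)^k \<le> card A" for A :: "(nat \<Rightarrow> int) set"
  proof
    assume "A = {}" then show False using that by simp
  qed
  have "(\<exists>v'\<in>Cs k b (s - 1). fiber_adj G v v') \<longleftrightarrow> s > lb k w1"
  proof
    assume "\<exists>v'\<in>Cs k b (s - 1). fiber_adj G v v'"
    then obtain v' where "v' \<in> Cs k b (s-1)" by blast
    then show "s > lb k w1" using FAk_bounds[of v' k w1 w2 c] unfolding Cs_def b_def by auto
  next
    assume "s > lb k w1"
    then show "\<exists>v'\<in>Cs k b (s - 1). fiber_adj G v v'" using ne[OF D] by blast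
  qed
  moreover have "(\<exists>v'\<in>Cs k b (s + 1). fiber_adj G v v') \<longleftrightarrow> s < ub k w2 c"
  proof
    assume "\<exists>v'\<in>Cs k b (s + 1). fiber_adj G v v'"
    then obtain v' where "v' \<in> Cs k b (s+1)" by blast
    then show "s < ub k w2 c" using FAk_bounds[of v' k w1 w2 c] unfolding Cs_def b_def by auto
  next
    assume "s < ub k w2 c"
    then show "\<exists>v'\<in>Cs k b (s + 1). fiber_adj G v v'" using ne[OF U] by blast
  qed
  ultimately show ?thesis using D U by blast
qed

end
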